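(* Let $\lambda\ge 1/\sqrt{5}$, let $r>0$, $a\in\mathbb{R}$, and let $0<\mu<1/2$ be a constant such that for every $\rho>0$ the spiral $t\mapsto(\rho\cos t,\rho\sin t,\mu\rho t)$, $t\in\mathbb{R}$, is self-expanded. Then there exists a $\lambda$-eel $\gamma:I\to \mathrm{Cyl}(r,[a,a+2\pi\mu r])$ whose length is greater than $1$, whose initial point lies on the top of the cylinder (i.e. has $z$-coordinate $a+2\pi\mu r$) and whose last point lies on the bottom (i.e. has $z$-coordinate $a$).
   Context: $\mathbb{R}^3$ has the Euclidean inner product $\langle\cdot,\cdot\rangle$ and norm $\|\cdot\|$. $\mathrm{Cyl}(r,[a,b])=\{(x,y,z)\in\mathbb{R}^3: x^2+y^2\le r^2,\ a\le z\le b\}$. A curve $\gamma$ on an interval is self-expanded if for all $t_1\le t_2\le t_3$: $\|\gamma(t_1)-\gamma(t_2)\|\le\|\gamma(t_1)-\gamma(t_3)\|$. A $\lambda$-eel is a continuous curve $\gamma:I\to\mathbb{R}^3$ ($I$ an interval) with a nonzero right derivative $\gamma'(\tau)$ at each point such that for all $t<\tau$ in $I$: $\langle\gamma'(\tau),\gamma(t)-\gamma(\tau)\rangle\le\lambda\|\gamma'(\tau)\|\|\gamma(t)-\gamma(\tau)\|$. Length is $\sup\sum\|\gamma(t_i)-\gamma(t_{i+1})\|$ over finite increasing sequences in $I$. *)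

theory Defs
  imports "HOL-Analysis.Analysis"
begin

definition Cyl :: "real \<Rightarrow> real \<Rightarrow> real \<Rightarrow> (real^3) set" where
  "Cyl r a b = {p. (p$1)^2 + (p$2)^2 \<le> r^2 \<and> a \<le> p$3 \<and> p$3 \<le> b}"

definition self_expanded :: "(real \<Rightarrow> real^3) \<Rightarrow> real set \<Rightarrow> bool" where
  "self_expanded \<gamma> I \<longleftrightarrow>
     (\<forall>t1\<in>I. \<forall>t2\<in>I. \<forall>t3\<in>I. t1 \<le> t2 \<and> t2 \<le> t3 \<longrightarrow>
        norm (\<gamma> t1 - \<gamma> t2) \<le> norm (\<gamma> t1 - \<gamma> t3))"

definition eel :: "real \<Rightarrow> (real \<Rightarrow> real^3) \<Rightarrow> real set \<Rightarrow> bool" where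
  "eel lam \<gamma> I \<longleftrightarrow> is_interval I \<and> continuous_on I \<gamma> \<and>
     (\<forall>\<tau>\<in>I. \<exists>v. v \<noteq> 0 \<and> (\<gamma> has_vector_derivative v) (at \<tau> within (I \<inter> {\<tau>..})) \<and>
        (\<forall>t\<in>I. t < \<tau> \<longrightarrow> inner v (\<gamma> t - \<gamma> \<tau>) \<le> lam * norm v * norm (\<gamma> t - \<gamma> \<tau>)))"

definition curve_length :: "(real \<Rightarrow> real^3) \<Rightarrow> real set \<Rightarrow> ereal" where
  "curve_length \<gamma> I = Sup {ereal (\<Sum>i<n. norm (\<gamma> (t i) - \<gamma> (t (Suc i)))) | n t.
       (\<forall>i\<le>n. t i \<in> I) \<and> (\<forall>i<n. t i < t (Suc i))}"

definition spiral :: "real \<Rightarrow> real \<Rightarrow> real \<Rightarrow> real^3" where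
  "spiral \<mu> \<rho> t = vector [\<rho> * cos t, \<rho> * sin t, \<mu> * \<rho> * t]"

end

theory Submission
  imports Defs
begin


lemma vec3_eq: "(vector [x,y,z]::real^3) = x *\<^sub>R axis 1 1 + y *\<^sub>R axis 2 1 + z *\<^sub>R axis 3 1"
  by (simp add: vec_eq_iff forall_3 axis_def)

lemma inner3: "inner (x::real^3) y = x$1*y$1 + x$2*y$2 + x$3*y$3"
  by (simp add: inner_vec_def sum_3)

lemma norm3: "norm (x::real^3) = sqrt ((x$1)^2 + (x$2)^2 + (x$3)^2)"
  by (simp add: norm_eq_sqrt_inner inner3 power2_eq_square)

definition Peel :: "real \<Rightarrow> (real \<Rightarrow> real^3) \<Rightarrow> (real \<Rightarrow> real^3) \<Rightarrow> real \<Rightarrow> real \<Rightarrow> bool" where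
  "Peel lam g v s e \<longleftrightarrow> (\<forall>\<tau>\<in>{s..e}. v \<tau> \<noteq> 0 \<and> (g has_vector_derivative v \<tau>) (at \<tau> within {\<tau>..e}) \<and>
      (\<forall>t\<in>{s..e}. t < \<tau> \<longrightarrow> inner (v \<tau>) (g t - g \<tau>) \<le> lam * norm (v \<tau>) * norm (g t - g \<tau>)))"

lemma Peel_eel:
  assumes P: "Peel lam g v s e" and c: "continuous_on {s..e} g"
  shows "eel lam g {s..e}"
  unfolding eel_def
proof (intro conjI ballI)
  show "is_interval {s..e}" by (rule is_interval_cc)
  show "continuous_on {s..e} g" by (rule c)
  fix \<tau> assume \<tau>: "\<tau> \<in> {s..e}"
  have eq: "{s..e} \<inter> {\<tau>..} = {\<tau>..e}" using \<tau> by auto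
  show "\<exists>v. v \<noteq> 0 \<and> (g has_vector_derivative v) (at \<tau> within ({s..e} \<inter> {\<tau>..})) \<and>
        (\<forall>t\<in>{s..e}. t < \<tau> \<longrightarrow> inner v (g t - g \<tau>) \<le> lam * norm v * norm (g t - g \<tau>))"
    using P \<tau> unfolding Peel_def eq by blast
qed

lemma Peel_glue:
  assumes P1: "Peel lam g1 v1 s m" and P2: "Peel lam g2 v2 m e"
    and eqm: "g1 m = g2 m" and sm: "s \<le> m" and me: "m \<le> e"
    and cross: "\<And>\<tau> t. \<tau> \<in> {m..e} \<Longrightarrow> t \<in> {s..<m} \<Longrightarrow>
        inner (v2 \<tau>) (g1 t - g2 \<tau>) \<le> lam * norm (v2 \<tau>) * norm (g1 t - g2 \<tau>)"
  shows "Peel lam (\<lambda>t. if t \<le> m then g1 t else g2 t) (\<lambda>t. if t < m then v1 t else v2 t) s e"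
  unfolding Peel_def
proof (intro ballI conjI)
  fix \<tau> assume \<tau>: "\<tau> \<in> {s..e}"
  let ?g = "\<lambda>t. if t \<le> m then g1 t else g2 t"
  let ?v = "\<lambda>t. if t < m then v1 t else v2 t"
  show "?v \<tau> \<noteq> 0"
    using P1 P2 \<tau> unfolding Peel_def by (cases "\<tau> < m") auto
  show "(?g has_vector_derivative ?v \<tau>) (at \<tau> within {\<tau>..e})"
  proof (cases "\<tau> < m")
    case True
    have d1: "(g1 has_vector_derivative v1 \<tau>) (at \<tau> within {\<tau>..m})"
      using P1 \<tau> True unfolding Peel_def by auto
    have "(?g has_vector_derivative v1 \<tau>) (at \<tau> within {\<tau>..m})"
      by (rule has_vector_derivative_transform[OF _ _ d1]) (use True in auto)
    moreover have "\<tau> < e" using True me by simp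
    hence "at \<tau> within {\<tau>..m} = at \<tau> within {\<tau>..e}"
      using True by (simp add: at_within_Icc_at_right)
    ultimately show ?thesis using True by simp
  next
    case False
    have d2: "(g2 has_vector_derivative v2 \<tau>) (at \<tau> within {\<tau>..e})"
      using P2 \<tau> False unfolding Peel_def by auto
    have "(?g has_vector_derivative v2 \<tau>) (at \<tau> within {\<tau>..e})"
    proof (rule has_vector_derivative_transform[OF _ _ d2])
      show "\<tau> \<in> {\<tau>..e}" using \<tau> by auto
      fix x assume x: "x \<in> {\<tau>..e}"
      show "?g x = g2 x"
      proof (cases "x \<le> m")
        case True
        then have "x = m" using False x by auto
        then show ?thesis using eqm by simp
      qed simp
    qed
    then show ?thesis using False by simp
  qed
  fix t assume t: "t \<in> {s..e}"
  show "t < \<tau> \<longrightarrow> inner (?v \<tau>) (?g t - ?g \<tau>) \<le> lam * norm (?v \<tau>) * norm (?g t - ?g \<tau>)"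
  proof
    assume lt: "t < \<tau>"
    consider "\<tau> < m" | "\<tau> \<ge> m" "t < m" | "\<tau> \<ge> m" "t \<ge> m" by linarith
    then show "inner (?v \<tau>) (?g t - ?g \<tau>) \<le> lam * norm (?v \<tau>) * norm (?g t - ?g \<tau>)"
    proof cases
      case 1 then show ?thesis using P1 \<tau> t lt unfolding Peel_def by auto
    next
      case 2
      have "?g \<tau> = g2 \<tau>" using 2 eqm by auto
      moreover have "?g t = g1 t" using 2 by auto
      moreover have "?v \<tau> = v2 \<tau>" using 2 by auto
      ultimately show ?thesis using cross[of \<tau> t] 2 \<tau> t by auto
    next
      case 3
      have "?g \<tau> = g2 \<tau>" using 3 eqm by auto
      moreover have "?g t = g2 t" using 3 eqm by auto
      moreover have "?v \<tau> = v2 \<tau>" using 3 by auto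
      ultimately show ?thesis using P2 3 \<tau> t lt unfolding Peel_def by auto
    qed
  qed
qed

lemma cont_glue:
  fixes s m e :: real and g1 g2 :: "real \<Rightarrow> 'b::topological_space"
  assumes "continuous_on {s..m} g1" "continuous_on {m..e} g2" "g1 m = g2 m"
  shows "continuous_on {s..e} (\<lambda>t. if t \<le> m then g1 t else g2 t)"
proof -
  have "continuous_on {s..e} (\<lambda>t. if id t \<le> m then g1 t else g2 t)"
  proof (rule continuous_on_cases_le[where h=id and a=m and S="{s..e}" and f=g1 and g=g2])
    show "continuous_on {t \<in> {s..e}. id t \<le> m} g1"
      by (rule continuous_on_subset[OF assms(1)]) auto
    show "continuous_on {t \<in> {s..e}. m \<le> id t} g2"
      by (rule continuous_on_subset[OF assms(2)]) auto
  qed (use assms in \<open>auto simp: continuous_on_id\<close>)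
  then show ?thesis by simp
qed

lemma key_sin:
  fixes \<mu> :: real
  assumes se: "self_expanded (spiral \<mu> 1) UNIV" and phi: "0 \<le> \<phi>"
  shows "0 \<le> sin \<phi> + \<mu>^2 * \<phi>"
proof (rule ccontr)
  assume neg: "\<not> ?thesis"
  define g where "g t = 2 - 2 * cos t + \<mu>^2 * t^2" for t :: real
  have gn: "norm (spiral \<mu> 1 0 - spiral \<mu> 1 t) = sqrt (g t)" for t
  proof -
    have "(1 - cos t)^2 + (0 - sin t)^2 + (0 - \<mu>*t)^2 = g t"
      using sin_cos_squared_add[of t] by (simp add: g_def power2_eq_square algebra_simps)
    then show ?thesis by (simp add: norm3 spiral_def)
  qed
  have mono: "g t \<le> g t'" if "0 \<le> t" "t \<le> t'" for t t'
  proof -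
    have "norm (spiral \<mu> 1 0 - spiral \<mu> 1 t) \<le> norm (spiral \<mu> 1 0 - spiral \<mu> 1 t')"
      using se that unfolding self_expanded_def by auto
    then show ?thesis unfolding gn by simp
  qed
  have "DERIV g \<phi> :> (2 * sin \<phi> + \<mu>^2 * (2 * \<phi>))"
    unfolding g_def by (auto intro!: derivative_eq_intros)
  moreover have "2 * sin \<phi> + \<mu>^2 * (2 * \<phi>) < 0" using neg by simp
  ultimately obtain d where d: "d > 0" "\<And>h. h > 0 \<Longrightarrow> h < d \<Longrightarrow> g \<phi> > g (\<phi> + h)"
    using DERIV_neg_dec_right by blast
  have "g \<phi> > g (\<phi> + d/2)" using d by simp
  moreover have "g \<phi> \<le> g (\<phi> + d/2)" using mono[of \<phi> "\<phi> + d/2"] phi d by simp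
  ultimately show False by simp
qed



definition S :: "real \<Rightarrow> real \<Rightarrow> real \<Rightarrow> real \<Rightarrow> real \<Rightarrow> real^3" where
  "S mu R \<sigma> z0 \<phi> = vector [R * cos \<phi>, R * sin \<phi>, z0 + \<sigma> * mu * R * \<phi>]"
definition W :: "real \<Rightarrow> real \<Rightarrow> real \<Rightarrow> real \<Rightarrow> real^3" where
  "W mu R \<sigma> \<phi> = vector [- R * sin \<phi>, R * cos \<phi>, \<sigma> * mu * R]"

lemma spiral_own:
  assumes F: "\<And>\<psi>. 0 \<le> \<psi> \<Longrightarrow> 0 \<le> sin \<psi> + mu^2 * \<psi>"
    and sg: "\<sigma> = 1 \<or> \<sigma> = -1" and lt: "\<phi>' < \<phi>"
  shows "inner (W mu R \<sigma> \<phi>) (S mu R \<sigma> z0 \<phi>' - S mu R \<sigma> z0 \<phi>) \<le> 0"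
proof -
  have "inner (W mu R \<sigma> \<phi>) (S mu R \<sigma> z0 \<phi>' - S mu R \<sigma> z0 \<phi>) = - (R^2 * (sin (\<phi> - \<phi>') + mu^2 * (\<phi> - \<phi>')))"
    using sg by (auto simp: inner3 S_def W_def sin_diff algebra_simps power2_eq_square)
  moreover have "0 \<le> R^2 * (sin (\<phi> - \<phi>') + mu^2 * (\<phi> - \<phi>'))"
    using F[of "\<phi> - \<phi>'"] lt by simp
  ultimately show ?thesis by simp
qed

lemma spiral_conn:
  assumes F: "\<And>\<psi>. 0 \<le> \<psi> \<Longrightarrow> 0 \<le> sin \<psi> + mu^2 * \<psi>"
    and sg: "\<sigma> = 1 \<or> \<sigma> = -1" and s: "0 \<le> s" "s \<le> R" and phi: "0 \<le> \<phi>"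
  shows "inner (W mu R \<sigma> \<phi>) (vector [s, 0, z0] - S mu R \<sigma> z0 \<phi>) \<le> 0"
proof -
  have eq: "inner (W mu R \<sigma> \<phi>) (vector [s, 0, z0] - S mu R \<sigma> z0 \<phi>) = - (R * s * sin \<phi> + mu^2 * R^2 * \<phi>)"
    using sg by (auto simp: inner3 S_def W_def algebra_simps power2_eq_square)
  have "0 \<le> R * s * sin \<phi> + mu^2 * R^2 * \<phi>"
  proof (cases "sin \<phi> \<ge> 0")
    case True then show ?thesis using s phi by simp
  next
    case False
    have h1: "0 \<le> R * (R - s)" using s by simp
    have h2: "0 \<le> - sin \<phi>" using False by simp
    have a: "0 \<le> R * (R - s) * (- sin \<phi>)" using mult_nonneg_nonneg[OF h1 h2] .
    have b: "0 \<le> R^2 * (sin \<phi> + mu^2 * \<phi>)" using F[OF phi] by simp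
    have "R * s * sin \<phi> + mu^2 * R^2 * \<phi> = R * (R - s) * (- sin \<phi>) + R^2 * (sin \<phi> + mu^2 * \<phi>)"
      by (simp add: algebra_simps power2_eq_square)
    then show ?thesis using a b by linarith
  qed
  then show ?thesis using eq by simp
qed

lemma spiral_far:
  assumes x: "(x$1)^2 + (x$2)^2 \<le> \<rho>^2" and rho: "0 \<le> \<rho>" and R: "\<rho> \<le> R"
    and far: "\<rho> * (1 + \<delta>) \<le> \<delta> * R" and dl: "\<delta> = sqrt ((1 + mu^2) / 5) - mu" and dpos: "0 < \<delta>"
    and lam: "1 / sqrt 5 \<le> lam" and sg: "\<sigma> = 1 \<or> \<sigma> = -1" and mu: "0 \<le> mu"
  shows "inner (W mu R \<sigma> \<phi>) (x - S mu R \<sigma> z0 \<phi>) \<le> lam * norm (W mu R \<sigma> \<phi>) * norm (x - S mu R \<sigma> z0 \<phi>)"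
proof -
  define d where "d = x - S mu R \<sigma> z0 \<phi>"
  define A where "A = - sin \<phi> * x$1 + cos \<phi> * x$2"
  define B where "B = cos \<phi> * x$1 + sin \<phi> * x$2"
  define q where "q = sqrt ((x$1)^2 + (x$2)^2)"
  have R0: "0 \<le> R" using rho R by simp
  have d1: "d$1 = x$1 - R * cos \<phi>" and d2: "d$2 = x$2 - R * sin \<phi>"
    and d3: "d$3 = x$3 - (z0 + \<sigma> * mu * R * \<phi>)" by (simp_all add: d_def S_def)
  have inn: "inner (W mu R \<sigma> \<phi>) d = R * A + \<sigma> * mu * R * d$3"
    unfolding inner3 d1 d2 by (simp add: W_def A_def algebra_simps)
  have nW: "norm (W mu R \<sigma> \<phi>) = R * sqrt (1 + mu^2)"
  proof -
    have e: "(- R * sin \<phi>)^2 + (R * cos \<phi>)^2 + (\<sigma> * mu * R)^2 = R^2 * ((sin \<phi>)^2 + (cos \<phi>)^2) + \<sigma>^2 * mu^2 * R^2"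
      by algebra
    have "\<sigma>^2 = 1" using sg by auto
    hence "(- R * sin \<phi>)^2 + (R * cos \<phi>)^2 + (\<sigma> * mu * R)^2 = R^2 * (1 + mu^2)"
      unfolding e sin_cos_squared_add by (simp add: algebra_simps)
    then show ?thesis using R0 by (simp add: norm3 W_def real_sqrt_mult)
  qed
  have AB: "A^2 + B^2 = (x$1)^2 + (x$2)^2"
  proof -
    have "A^2 + B^2 = ((sin \<phi>)^2 + (cos \<phi>)^2) * ((x$1)^2 + (x$2)^2)"
      unfolding A_def B_def by algebra
    then show ?thesis by simp
  qed
  have q0: "0 \<le> q" by (simp add: q_def)
  have qq: "q^2 = (x$1)^2 + (x$2)^2" by (simp add: q_def)
  have qr: "q \<le> \<rho>" using real_sqrt_le_mono[OF x] rho unfolding q_def by simp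
  have "A^2 \<le> q^2" using AB qq zero_le_power2[of B] by linarith
  hence Aq: "A \<le> q" using q0 by (rule power2_le_imp_le)
  have "B^2 \<le> q^2" using AB qq zero_le_power2[of A] by linarith
  hence Bq: "B \<le> q" using q0 by (rule power2_le_imp_le)
  have hz: "(R - \<rho>)^2 \<le> (d$1)^2 + (d$2)^2"
  proof -
    have e0: "(d$1)^2 + (d$2)^2 = q^2 - 2 * R * B + R^2 * ((sin \<phi>)^2 + (cos \<phi>)^2)"
      unfolding d1 d2 qq B_def
      by algebra
    have e1: "(d$1)^2 + (d$2)^2 = q^2 - 2 * R * B + R^2"
      unfolding e0 sin_cos_squared_add by simp
    have "0 \<le> (\<rho> - q) * (2 * R - \<rho> - q)" using qr R q0 by simp
    moreover have "R * B \<le> R * q" using Bq R0 by (simp add: mult_left_mono)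
    ultimately show ?thesis unfolding e1 by (simp add: algebra_simps power2_eq_square)
  qed
  have nd: "norm d = sqrt ((d$1)^2 + (d$2)^2 + (d$3)^2)" by (simp add: norm3)
  have nd1: "R - \<rho> \<le> norm d"
  proof -
    have "sqrt ((R - \<rho>)^2) \<le> norm d" unfolding nd using hz
      by (simp only: real_sqrt_le_iff) (simp add: add_increasing2)
    then show ?thesis using R by simp
  qed
  have nd3: "\<bar>d$3\<bar> \<le> norm d" by (rule component_le_norm_cart)
  have s5: "sqrt (1 + mu^2) / sqrt 5 = mu + \<delta>" using dl by (simp add: real_sqrt_divide)
  have "R * A + \<sigma> * mu * R * d$3 \<le> R * \<rho> + mu * R * \<bar>d$3\<bar>"
  proof -
    have "R * A \<le> R * \<rho>" using Aq qr R0 by (simp add: mult_left_mono)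
    moreover have "\<sigma> * mu * R * d$3 \<le> mu * R * \<bar>d$3\<bar>"
    proof -
      have "\<sigma> * d$3 \<le> \<bar>d$3\<bar>" using sg by auto
      from mult_left_mono[OF this mult_nonneg_nonneg[OF mu R0]] show ?thesis by (simp add: algebra_simps)
    qed
    ultimately show ?thesis by linarith
  qed
  also have "\<dots> \<le> R * (mu * norm d + \<delta> * norm d)"
  proof -
    have "\<rho> \<le> \<delta> * (R - \<rho>)" using far by (simp add: algebra_simps)
    also have "\<dots> \<le> \<delta> * norm d" using nd1 dpos by (simp add: mult_left_mono)
    finally have "\<rho> + mu * \<bar>d$3\<bar> \<le> mu * norm d + \<delta> * norm d"
      using nd3 mu mult_left_mono[OF nd3 mu] by linarith
    from mult_left_mono[OF this R0] show ?thesis by (simp add: algebra_simps)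
  qed
  also have "\<dots> = (1 / sqrt 5) * (R * sqrt (1 + mu^2)) * norm d"
    using s5 by (simp add: field_simps)
  also have "\<dots> \<le> lam * (R * sqrt (1 + mu^2)) * norm d"
    using lam R0 by (intro mult_right_mono) auto
  finally show ?thesis using inn nW by (simp add: d_def)
qed



lemma spiral_deriv:
  "((\<lambda>t. S mu R \<sigma> z0 (\<Theta> * (t - m))) has_vector_derivative \<Theta> *\<^sub>R W mu R \<sigma> (\<Theta> * (\<tau> - m))) (at \<tau>)"
  unfolding S_def W_def vec3_eq
  by (auto intro!: derivative_eq_intros simp: algebra_simps)

lemma conn_deriv:
  "((\<lambda>t. vector [\<rho> + (R - \<rho>) * (t - m), 0, zc] :: real^3) has_vector_derivative vector [R - \<rho>, 0, 0]) (at \<tau>)"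
  unfolding vec3_eq
  by (auto intro!: derivative_eq_intros simp: algebra_simps)

lemma spiral_cont: "continuous_on A (\<lambda>t. S mu R \<sigma> z0 (\<Theta> * (t - m)))"
  by (intro continuous_at_imp_continuous_on ballI has_vector_derivative_continuous[OF spiral_deriv])

lemma conn_cont: "continuous_on A (\<lambda>t. vector [\<rho> + (R - \<rho>) * (t - m), 0, zc] :: real^3)"
  by (intro continuous_at_imp_continuous_on ballI has_vector_derivative_continuous[OF conn_deriv])

lemma scale_ineq:
  assumes "inner w d \<le> lam * norm w * norm d" "0 < \<Theta>"
  shows "inner (\<Theta> *\<^sub>R w) d \<le> lam * norm (\<Theta> *\<^sub>R w) * norm d"
proof -
  have "\<Theta> * inner w d \<le> \<Theta> * (lam * norm w * norm d)" using assms by (simp add: mult_left_mono)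
  then show ?thesis using assms(2) by (simp add: algebra_simps)
qed

lemma spiral_Peel:
  assumes F: "\<And>\<psi>. 0 \<le> \<psi> \<Longrightarrow> 0 \<le> sin \<psi> + mu^2 * \<psi>"
    and sg: "\<sigma> = 1 \<or> \<sigma> = -1" and R: "0 < R" and T: "0 < \<Theta>" and mu: "0 < mu" and lam: "0 \<le> lam"
  shows "Peel lam (\<lambda>t. S mu R \<sigma> z0 (\<Theta> * (t - m))) (\<lambda>t. \<Theta> *\<^sub>R W mu R \<sigma> (\<Theta> * (t - m))) m e"
  unfolding Peel_def
proof (intro ballI conjI)
  fix \<tau> assume \<tau>: "\<tau> \<in> {m..e}"
  have "W mu R \<sigma> (\<Theta> * (\<tau> - m)) $ 3 \<noteq> 0" using sg R mu by (auto simp: W_def)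
  hence "W mu R \<sigma> (\<Theta> * (\<tau> - m)) \<noteq> 0" by auto
  then show "\<Theta> *\<^sub>R W mu R \<sigma> (\<Theta> * (\<tau> - m)) \<noteq> 0" using T by simp
  show "((\<lambda>t. S mu R \<sigma> z0 (\<Theta> * (t - m))) has_vector_derivative \<Theta> *\<^sub>R W mu R \<sigma> (\<Theta> * (\<tau> - m))) (at \<tau> within {\<tau>..e})"
    by (rule has_vector_derivative_at_within[OF spiral_deriv])
  fix t assume t: "t \<in> {m..e}"
  show "t < \<tau> \<longrightarrow> inner (\<Theta> *\<^sub>R W mu R \<sigma> (\<Theta> * (\<tau> - m))) (S mu R \<sigma> z0 (\<Theta> * (t - m)) - S mu R \<sigma> z0 (\<Theta> * (\<tau> - m)))
      \<le> lam * norm (\<Theta> *\<^sub>R W mu R \<sigma> (\<Theta> * (\<tau> - m))) * norm (S mu R \<sigma> z0 (\<Theta> * (t - m)) - S mu R \<sigma> z0 (\<Theta> * (\<tau> - m)))"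
  proof
    assume lt: "t < \<tau>"
    have "\<Theta> * (t - m) < \<Theta> * (\<tau> - m)" using lt T by simp
    from spiral_own[OF F sg this, of R z0]
    have "inner (W mu R \<sigma> (\<Theta> * (\<tau> - m))) (S mu R \<sigma> z0 (\<Theta> * (t - m)) - S mu R \<sigma> z0 (\<Theta> * (\<tau> - m))) \<le> 0" by simp
    hence "inner (W mu R \<sigma> (\<Theta> * (\<tau> - m))) (S mu R \<sigma> z0 (\<Theta> * (t - m)) - S mu R \<sigma> z0 (\<Theta> * (\<tau> - m)))
      \<le> lam * norm (W mu R \<sigma> (\<Theta> * (\<tau> - m))) * norm (S mu R \<sigma> z0 (\<Theta> * (t - m)) - S mu R \<sigma> z0 (\<Theta> * (\<tau> - m)))"
      using lam by (smt (verit) mult_nonneg_nonneg norm_ge_zero)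
    then show "inner (\<Theta> *\<^sub>R W mu R \<sigma> (\<Theta> * (\<tau> - m))) (S mu R \<sigma> z0 (\<Theta> * (t - m)) - S mu R \<sigma> z0 (\<Theta> * (\<tau> - m)))
      \<le> lam * norm (\<Theta> *\<^sub>R W mu R \<sigma> (\<Theta> * (\<tau> - m))) * norm (S mu R \<sigma> z0 (\<Theta> * (t - m)) - S mu R \<sigma> z0 (\<Theta> * (\<tau> - m)))"
      using T by (rule scale_ineq)
  qed
qed

lemma conn_Peel:
  assumes rR: "\<rho> < R" and lam: "0 \<le> lam"
  shows "Peel lam (\<lambda>t. vector [\<rho> + (R - \<rho>) * (t - m), 0, zc]) (\<lambda>t. vector [R - \<rho>, 0, 0]) m e"
  unfolding Peel_def
proof (intro ballI conjI)
  fix \<tau> assume \<tau>: "\<tau> \<in> {m..e}"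
  have "(vector [R - \<rho>, 0, 0] :: real^3) $ 1 \<noteq> 0" using rR by simp
  then show "(vector [R - \<rho>, 0, 0] :: real^3) \<noteq> 0" by (metis zero_index)
  show "((\<lambda>t. vector [\<rho> + (R - \<rho>) * (t - m), 0, zc]) has_vector_derivative (vector [R - \<rho>, 0, 0] :: real^3)) (at \<tau> within {\<tau>..e})"
    using conn_deriv by (rule has_vector_derivative_at_within)
  fix t assume t: "t \<in> {m..e}"
  let ?d = "(vector [\<rho> + (R - \<rho>) * (t - m), 0, zc] :: real^3) - vector [\<rho> + (R - \<rho>) * (\<tau> - m), 0, zc]"
  show "t < \<tau> \<longrightarrow> inner (vector [R - \<rho>, 0, 0]) ?d \<le> lam * norm (vector [R - \<rho>, 0, 0] :: real^3) * norm ?d"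
  proof
    assume lt: "t < \<tau>"
    have "inner (vector [R - \<rho>, 0, 0]) ?d = (R - \<rho>) * ((R - \<rho>) * (t - \<tau>))"
      by (simp add: inner3 algebra_simps)
    also have "\<dots> \<le> 0" using rR lt by (simp add: mult_nonneg_nonpos)
    finally show "inner (vector [R - \<rho>, 0, 0]) ?d \<le> lam * norm (vector [R - \<rho>, 0, 0] :: real^3) * norm ?d"
      using lam by (smt (verit) mult_nonneg_nonneg norm_ge_zero)
  qed
qed

lemma S_facts:
  assumes "mu * R * \<Theta> = H" "cos \<Theta> = 1" "sin \<Theta> = 0"
    "(z0 = a + H \<and> \<sigma> = -1) \<or> (z0 = a \<and> \<sigma> = 1)" "0 < mu" "0 < R"
  shows "(S mu R \<sigma> z0 \<phi> $ 1)^2 + (S mu R \<sigma> z0 \<phi> $ 2)^2 = R^2"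
    and "0 \<le> \<phi> \<Longrightarrow> \<phi> \<le> \<Theta> \<Longrightarrow> a \<le> S mu R \<sigma> z0 \<phi> $ 3 \<and> S mu R \<sigma> z0 \<phi> $ 3 \<le> a + H"
    and "S mu R \<sigma> z0 0 = vector [R, 0, z0]"
    and "S mu R \<sigma> z0 \<Theta> = vector [R, 0, z0 + \<sigma> * H]"
proof -
  have "(R * cos \<phi>)^2 + (R * sin \<phi>)^2 = R^2 * ((sin \<phi>)^2 + (cos \<phi>)^2)" by algebra
  then show "(S mu R \<sigma> z0 \<phi> $ 1)^2 + (S mu R \<sigma> z0 \<phi> $ 2)^2 = R^2" by (simp add: S_def)
  show "S mu R \<sigma> z0 0 = vector [R, 0, z0]" by (simp add: S_def)
  have e: "\<sigma> * mu * R * \<Theta> = \<sigma> * H" using assms(1) by (metis mult.assoc)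
  show "S mu R \<sigma> z0 \<Theta> = vector [R, 0, z0 + \<sigma> * H]" unfolding S_def e using assms(2,3)
    by simp
  assume p: "0 \<le> \<phi>" "\<phi> \<le> \<Theta>"
  have "0 \<le> mu * R * \<phi>" using p assms by simp
  moreover have "mu * R * \<phi> \<le> mu * R * \<Theta>" by (intro mult_left_mono) (use p assms(5,6) in auto)
  ultimately show "a \<le> S mu R \<sigma> z0 \<phi> $ 3 \<and> S mu R \<sigma> z0 \<phi> $ 3 \<le> a + H"
    using assms(1,4) by (auto simp: S_def algebra_simps)
qed



lemma sq_bound1: "(x$1)^2 + (x$2)^2 \<le> \<rho>^2 \<Longrightarrow> 0 \<le> \<rho> \<Longrightarrow> (x::real^3)$1 \<le> \<rho>"
proof -
  assume a: "(x$1)^2 + (x$2)^2 \<le> \<rho>^2" "0 \<le> \<rho>"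
  have "(x$1)^2 \<le> \<rho>^2" using a(1) zero_le_power2[of "x$2"] by linarith
  then show ?thesis using a(2) by (rule power2_le_imp_le)
qed

lemma step_lemma:
  assumes F: "\<And>\<psi>. 0 \<le> \<psi> \<Longrightarrow> 0 \<le> sin \<psi> + mu^2 * \<psi>"
    and lam: "1 / sqrt 5 \<le> lam" and dl: "\<delta> = sqrt ((1 + mu^2) / 5) - mu" and dpos: "0 < \<delta>"
    and mu: "0 < mu" and Hp: "0 < H"
    and r0: "0 < \<rho>0" and rR: "\<rho>0 < R" and far: "\<rho>0 * (1 + \<delta>) \<le> \<delta> * R"
    and T: "0 < \<Theta>" and muRT: "mu * R * \<Theta> = H" and cT: "cos \<Theta> = 1" and sT: "sin \<Theta> = 0"
    and zs: "(zc = a \<and> \<sigma> = 1) \<or> (zc = a + H \<and> \<sigma> = -1)"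
    and P: "Peel lam \<gamma> v 0 M" and C: "continuous_on {0..M} \<gamma>" and M: "0 \<le> M"
    and rng: "\<forall>t\<in>{0..M}. (\<gamma> t$1)^2 + (\<gamma> t$2)^2 \<le> \<rho>0^2 \<and> a \<le> \<gamma> t$3 \<and> \<gamma> t$3 \<le> a + H"
    and endp: "\<gamma> M = vector [\<rho>0, 0, zc]"
  shows "\<exists>\<gamma>' v'. Peel lam \<gamma>' v' 0 (M + 2) \<and> continuous_on {0..M+2} \<gamma>' \<and>
     (\<forall>t\<in>{0..M+2}. (\<gamma>' t$1)^2 + (\<gamma>' t$2)^2 \<le> R^2 \<and> a \<le> \<gamma>' t$3 \<and> \<gamma>' t$3 \<le> a + H) \<and>
     \<gamma>' (M + 2) = vector [R, 0, zc + \<sigma> * H] \<and> (\<forall>t\<in>{0..M}. \<gamma>' t = \<gamma> t) \<and>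
     H \<le> norm (\<gamma>' (M + 1) - \<gamma>' (M + 2))"
proof -
  have lam0: "0 \<le> lam" using lam by (smt (verit) divide_nonneg_nonneg real_sqrt_ge_zero)
  have sg: "\<sigma> = 1 \<or> \<sigma> = -1" using zs by auto
  define g2 :: "real \<Rightarrow> real^3" where "g2 t = vector [\<rho>0 + (R - \<rho>0) * (t - M), 0, zc]" for t
  define v2 :: "real \<Rightarrow> real^3" where "v2 t = vector [R - \<rho>0, 0, 0]" for t
  define \<gamma>1 where "\<gamma>1 t = (if t \<le> M then \<gamma> t else g2 t)" for t
  define v1 where "v1 t = (if t < M then v t else v2 t)" for t
  define g3 where "g3 t = S mu R \<sigma> zc (\<Theta> * (t - (M + 1)))" for t
  define v3 where "v3 t = \<Theta> *\<^sub>R W mu R \<sigma> (\<Theta> * (t - (M + 1)))" for t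
  define \<gamma>' where "\<gamma>' t = (if t \<le> M + 1 then \<gamma>1 t else g3 t)" for t
  define v' where "v' t = (if t < M + 1 then v1 t else v3 t)" for t
  have P2: "Peel lam g2 v2 M (M + 1)" unfolding g2_def v2_def by (rule conn_Peel[OF rR lam0])
  have P1: "Peel lam \<gamma>1 v1 0 (M + 1)" unfolding \<gamma>1_def[abs_def] v1_def[abs_def]
  proof (rule Peel_glue[OF P P2])
    show "\<gamma> M = g2 M" using endp by (simp add: g2_def)
    show "0 \<le> M" by (rule M)
    show "M \<le> M + 1" by simp
    fix \<tau> t assume \<tau>: "\<tau> \<in> {M..M+1}" and t: "t \<in> {0..<M}"
    have x1: "\<gamma> t $ 1 \<le> \<rho>0" using rng t r0 sq_bound1[of "\<gamma> t" \<rho>0] by auto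
    have "inner (v2 \<tau>) (\<gamma> t - g2 \<tau>) = (R - \<rho>0) * (\<gamma> t $ 1 - (\<rho>0 + (R - \<rho>0) * (\<tau> - M)))"
      by (simp add: v2_def g2_def inner3)
    also have "\<dots> \<le> 0"
    proof -
      have "0 \<le> (R - \<rho>0) * (\<tau> - M)" using rR \<tau> by simp
      then show ?thesis using x1 rR by (intro mult_nonneg_nonpos) auto
    qed
    finally show "inner (v2 \<tau>) (\<gamma> t - g2 \<tau>) \<le> lam * norm (v2 \<tau>) * norm (\<gamma> t - g2 \<tau>)"
      using lam0 by (smt (verit) mult_nonneg_nonneg norm_ge_zero)
  qed
  have P3: "Peel lam g3 v3 (M + 1) (M + 2)" unfolding g3_def[abs_def] v3_def[abs_def]
    by (rule spiral_Peel[OF F sg _ T mu lam0]) (use r0 rR in auto)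
  have e2: "M + 1 + 1 = M + 2" by simp
  have P': "Peel lam \<gamma>' v' 0 (M + 2)" unfolding \<gamma>'_def[abs_def] v'_def[abs_def]
  proof (rule Peel_glue[OF P1 P3])
    show "\<gamma>1 (M + 1) = g3 (M + 1)" by (simp add: \<gamma>1_def g2_def g3_def S_def)
    show "0 \<le> M + 1" using M by simp
    show "M + 1 \<le> M + 2" by simp
    fix \<tau> t assume \<tau>: "\<tau> \<in> {M+1..M+2}" and t: "t \<in> {0..<M+1}"
    define \<phi> where "\<phi> = \<Theta> * (\<tau> - (M + 1))"
    have phi0: "0 \<le> \<phi>" using \<tau> T by (simp add: \<phi>_def)
    have "inner (W mu R \<sigma> \<phi>) (\<gamma>1 t - S mu R \<sigma> zc \<phi>) \<le> lam * norm (W mu R \<sigma> \<phi>) * norm (\<gamma>1 t - S mu R \<sigma> zc \<phi>)"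
    proof (cases "t \<le> M")
      case True
      have "(\<gamma> t$1)^2 + (\<gamma> t$2)^2 \<le> \<rho>0^2" using rng True t by auto
      from spiral_far[OF this _ _ far dl dpos lam sg, of \<phi> zc] r0 rR mu True
      show ?thesis by (simp add: \<gamma>1_def)
    next
      case False
      have "\<gamma>1 t = vector [\<rho>0 + (R - \<rho>0) * (t - M), 0, zc]" using False by (simp add: \<gamma>1_def g2_def)
      moreover have "0 \<le> \<rho>0 + (R - \<rho>0) * (t - M)" using False rR r0 by (smt (verit) mult_nonneg_nonneg)
      moreover have "\<rho>0 + (R - \<rho>0) * (t - M) \<le> R"
      proof -
        have "(R - \<rho>0) * (t - M) \<le> (R - \<rho>0) * 1" using t rR by (intro mult_left_mono) auto
        then show ?thesis by simp
      qed
      ultimately have "inner (W mu R \<sigma> \<phi>) (\<gamma>1 t - S mu R \<sigma> zc \<phi>) \<le> 0"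
        using spiral_conn[OF F sg _ _ phi0] by simp
      then show ?thesis using lam0 by (smt (verit) mult_nonneg_nonneg norm_ge_zero)
    qed
    then show "inner (v3 \<tau>) (\<gamma>1 t - g3 \<tau>) \<le> lam * norm (v3 \<tau>) * norm (\<gamma>1 t - g3 \<tau>)"
      unfolding v3_def g3_def \<phi>_def[symmetric] using T by (rule scale_ineq)
  qed
  have C2: "continuous_on {M..M+1} g2" unfolding g2_def[abs_def] by (rule conn_cont)
  have C1: "continuous_on {0..M+1} \<gamma>1" unfolding \<gamma>1_def[abs_def]
    by (rule cont_glue[OF C C2]) (simp add: endp g2_def)
  have C3: "continuous_on {M+1..M+2} g3" unfolding g3_def[abs_def] by (rule spiral_cont)
  have C': "continuous_on {0..M+2} \<gamma>'" unfolding \<gamma>'_def[abs_def]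
    by (rule cont_glue[OF C1 C3]) (simp add: \<gamma>1_def g2_def g3_def S_def)
  have zs2: "(zc = a + H \<and> \<sigma> = -1) \<or> (zc = a \<and> \<sigma> = 1)" using zs by auto
  have Rp: "0 < R" using r0 rR by simp
  note SF = S_facts[OF muRT cT sT zs2 mu Rp]
  have rng': "\<forall>t\<in>{0..M+2}. (\<gamma>' t$1)^2 + (\<gamma>' t$2)^2 \<le> R^2 \<and> a \<le> \<gamma>' t$3 \<and> \<gamma>' t$3 \<le> a + H"
  proof
    fix t assume t: "t \<in> {0..M+2}"
    consider "t \<le> M" | "M < t" "t \<le> M + 1" | "M + 1 < t" by linarith
    then show "(\<gamma>' t$1)^2 + (\<gamma>' t$2)^2 \<le> R^2 \<and> a \<le> \<gamma>' t$3 \<and> \<gamma>' t$3 \<le> a + H"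
    proof cases
      case 1
      have "\<rho>0^2 \<le> R^2" using r0 rR by (intro power_mono) auto
      moreover have "(\<gamma> t$1)^2 + (\<gamma> t$2)^2 \<le> \<rho>0^2 \<and> a \<le> \<gamma> t$3 \<and> \<gamma> t$3 \<le> a + H"
        using rng t 1 by auto
      ultimately show ?thesis using 1 by (auto simp: \<gamma>'_def \<gamma>1_def)
    next
      case 2
      have "0 \<le> \<rho>0 + (R - \<rho>0) * (t - M)" using 2 rR r0 by (smt (verit) mult_nonneg_nonneg)
      moreover have "\<rho>0 + (R - \<rho>0) * (t - M) \<le> R"
      proof -
        have "(R - \<rho>0) * (t - M) \<le> (R - \<rho>0) * 1" using 2 rR by (intro mult_left_mono) auto
        then show ?thesis by simp
      qed
      ultimately have "(\<rho>0 + (R - \<rho>0) * (t - M))^2 \<le> R^2" by (intro power_mono) auto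
      then show ?thesis using 2 zs Hp by (auto simp: \<gamma>'_def \<gamma>1_def g2_def)
    next
      case 3
      have "0 \<le> \<Theta> * (t - (M + 1))" using 3 T by simp
      moreover have "\<Theta> * (t - (M + 1)) \<le> \<Theta>" using 3 t T by (simp add: mult_le_cancel_left1)
      ultimately show ?thesis using 3 SF(1)[of "\<Theta> * (t - (M + 1))"] SF(2)[of "\<Theta> * (t - (M + 1))"] Rp
        by (simp add: \<gamma>'_def g3_def)
    qed
  qed
  have end': "\<gamma>' (M + 2) = vector [R, 0, zc + \<sigma> * H]"
    using SF(4) Rp by (simp add: \<gamma>'_def g3_def)
  have same: "\<forall>t\<in>{0..M}. \<gamma>' t = \<gamma> t" by (auto simp: \<gamma>'_def \<gamma>1_def)
  have m1: "\<gamma>' (M + 1) = vector [R, 0, zc]" by (simp add: \<gamma>'_def \<gamma>1_def g2_def)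
  have "H \<le> norm (\<gamma>' (M + 1) - \<gamma>' (M + 2))"
  proof -
    have "\<bar>(\<gamma>' (M + 1) - \<gamma>' (M + 2)) $ 3\<bar> \<le> norm (\<gamma>' (M + 1) - \<gamma>' (M + 2))" by (rule component_le_norm_cart)
    moreover have "\<bar>(\<gamma>' (M + 1) - \<gamma>' (M + 2)) $ 3\<bar> = H" using m1 end' sg Hp by auto
    ultimately show ?thesis by simp
  qed
  then show ?thesis using P' C' rng' end' same by blast
qed



lemma sum_even_le:
  fixes f :: "nat \<Rightarrow> real"
  assumes "\<And>i. 0 \<le> f i"
  shows "(\<Sum>j\<le>N. f (2 * j)) \<le> (\<Sum>i<2 * N + 1. f i)"
proof (induction N)
  case 0 then show ?case by simp
next
  case (Suc N)
  have e: "2 * Suc N + 1 = Suc (Suc (2 * N + 1))" by simp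
  show ?case unfolding e using Suc assms[of "2 * N + 1"] by simp
qed

theorem proposition4p8:
  fixes lam r a \<mu> :: real
  assumes "lam \<ge> 1 / sqrt 5" and "r > 0" and "0 < \<mu>" and "\<mu> < 1/2"
    and "\<forall>\<rho>>0. self_expanded (spiral \<mu> \<rho>) UNIV"
  shows "\<exists>(\<gamma> :: real \<Rightarrow> real^3) s e. s \<le> e \<and> eel lam \<gamma> {s..e} \<and>
           \<gamma> ` {s..e} \<subseteq> Cyl r a (a + 2 * pi * \<mu> * r) \<and>
           curve_length \<gamma> {s..e} > 1 \<and>
           \<gamma> s $ 3 = a + 2 * pi * \<mu> * r \<and> \<gamma> e $ 3 = a"
proof -
  have se1: "self_expanded (spiral \<mu> 1) UNIV" using assms(5) by simp
  have F: "\<And>\<psi>. 0 \<le> \<psi> \<Longrightarrow> 0 \<le> sin \<psi> + \<mu>^2 * \<psi>" using key_sin[OF se1] by blast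
  define \<delta> where "\<delta> = sqrt ((1 + \<mu>^2) / 5) - \<mu>"
  have dpos: "0 < \<delta>"
  proof -
    have "\<mu> * \<mu> < (1/2) * (1/2)" using assms(3,4) by (intro mult_strict_mono) auto
    hence "\<mu>^2 < (1 + \<mu>^2) / 5" by (simp add: power2_eq_square)
    hence "sqrt (\<mu>^2) < sqrt ((1 + \<mu>^2) / 5)" by (rule real_sqrt_less_mono)
    then show ?thesis using assms(3) by (simp add: \<delta>_def)
  qed
  define K :: nat where "K = nat \<lceil>(1 + \<delta>) / \<delta>\<rceil> + 2"
  have K1: "(1 + \<delta>) / \<delta> \<le> real K" unfolding K_def by linarith
  have K2: "1 < real K" unfolding K_def by simp
  have K0: "0 < real K" using K2 by simp
  have Kd: "1 + \<delta> \<le> \<delta> * real K" using K1 dpos by (simp add: pos_divide_le_eq mult.commute)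
  define H where "H = 2 * pi * \<mu> * r"
  have Hp: "0 < H" using assms(2,3) by (simp add: H_def)
  define N :: nat where "N = nat \<lceil>1 / H\<rceil>"
  define n where "n = 2 * N"
  have len: "1 < real (n + 1) * H"
  proof -
    have "1 / H \<le> real N" unfolding N_def by linarith
    hence "1 \<le> real N * H" using Hp by (simp add: pos_divide_le_eq)
    moreover have "real (n + 1) * H = 2 * (real N * H) + H" by (simp add: n_def algebra_simps)
    ultimately show ?thesis using Hp by linarith
  qed
  define c where "c = r / real K ^ n"
  have cp: "0 < c" using assms(2) K0 by (simp add: c_def)
  define \<rho> where "\<rho> k = c * real K ^ k" for k
  define \<Theta> where "\<Theta> k = 2 * pi * real K ^ (n - k)" for k
  define zE where "zE (k::nat) = (if even k then a else a + H)" for k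
  have \<rho>p: "0 < \<rho> k" for k using cp K0 by (simp add: \<rho>_def)
  have \<rho>n: "\<rho> n = r" using K0 by (simp add: \<rho>_def c_def)
  have \<rho>S: "\<rho> (Suc k) = real K * \<rho> k" for k by (simp add: \<rho>_def)
  have \<Theta>p: "0 < \<Theta> k" for k using K0 by (simp add: \<Theta>_def)
  have muRT: "\<mu> * \<rho> k * \<Theta> k = H" if "k \<le> n" for k
  proof -
    have "real K ^ k * real K ^ (n - k) = real K ^ n" using that by (simp add: power_add[symmetric])
    then have "\<mu> * \<rho> k * \<Theta> k = 2 * pi * \<mu> * c * real K ^ n" unfolding \<rho>_def \<Theta>_def
      by (simp add: algebra_simps)
    also have "\<dots> = H" using K0 by (simp add: c_def H_def)
    finally show ?thesis .
  qed
  have cT: "cos (\<Theta> k) = 1" for k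
  proof -
    have e: "\<Theta> k = real (2 * K ^ (n - k)) * pi" by (simp add: \<Theta>_def)
    have "cos (real (2 * K ^ (n - k)) * pi) = 1" by (simp only: cos_npi power_mult) simp
    then show ?thesis using e by simp
  qed
  have sT: "sin (\<Theta> k) = 0" for k
  proof -
    have e: "\<Theta> k = real (2 * K ^ (n - k)) * pi" by (simp add: \<Theta>_def)
    show ?thesis unfolding e by (rule sin_npi)
  qed
  have lam0: "0 \<le> lam" using assms(1) by (smt (verit) divide_nonneg_nonneg real_sqrt_ge_zero)
  have far: "\<rho> k * (1 + \<delta>) \<le> \<delta> * \<rho> (Suc k)" for k
  proof -
    have "\<rho> k * (1 + \<delta>) \<le> \<rho> k * (\<delta> * real K)" using Kd \<rho>p[of k] by (intro mult_left_mono) auto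
    then show ?thesis by (simp add: \<rho>S algebra_simps)
  qed
  have rlt: "\<rho> k < \<rho> (Suc k)" for k using K2 \<rho>p[of k] by (simp add: \<rho>S)
  have main: "k \<le> n \<Longrightarrow> \<exists>\<gamma> v. Peel lam \<gamma> v 0 (2 * real k + 1) \<and> continuous_on {0..2 * real k + 1} \<gamma> \<and>
     (\<forall>t\<in>{0..2 * real k + 1}. (\<gamma> t$1)^2 + (\<gamma> t$2)^2 \<le> (\<rho> k)^2 \<and> a \<le> \<gamma> t$3 \<and> \<gamma> t$3 \<le> a + H) \<and>
     \<gamma> 0 $ 3 = a + H \<and> \<gamma> (2 * real k + 1) = vector [\<rho> k, 0, zE k] \<and>
     (\<forall>j\<le>k. H \<le> norm (\<gamma> (2 * real j) - \<gamma> (2 * real j + 1)))" for k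
  proof (induction k)
    case 0
    define g where "g t = S \<mu> (\<rho> 0) (-1) (a + H) (\<Theta> 0 * (t - 0))" for t
    define v where "v t = \<Theta> 0 *\<^sub>R W \<mu> (\<rho> 0) (-1) (\<Theta> 0 * (t - 0))" for t
    have P: "Peel lam g v 0 1" unfolding g_def[abs_def] v_def[abs_def]
      by (rule spiral_Peel[OF F _ \<rho>p \<Theta>p assms(3) lam0]) auto
    have C: "continuous_on {0..1} g" unfolding g_def[abs_def] by (rule spiral_cont)
    have zs: "(a + H = a + H \<and> (-1::real) = -1) \<or> (a + H = a \<and> (-1::real) = 1)" by simp
    note SF = S_facts[OF muRT[of 0] cT sT zs assms(3) \<rho>p, simplified]
    have rng: "\<forall>t\<in>{0..1}. (g t$1)^2 + (g t$2)^2 \<le> (\<rho> 0)^2 \<and> a \<le> g t$3 \<and> g t$3 \<le> a + H"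
    proof
      fix t :: real assume t: "t \<in> {0..1}"
      have "0 \<le> \<Theta> 0 * t" using t \<Theta>p[of 0] by simp
      moreover have "\<Theta> 0 * t \<le> \<Theta> 0" using t \<Theta>p[of 0] by (simp add: mult_le_cancel_left1)
      ultimately show "(g t$1)^2 + (g t$2)^2 \<le> (\<rho> 0)^2 \<and> a \<le> g t$3 \<and> g t$3 \<le> a + H"
        using SF(1)[of "\<Theta> 0 * t"] SF(2)[of "\<Theta> 0 * t"] by (simp add: g_def)
    qed
    have g0: "g 0 = vector [\<rho> 0, 0, a + H]" using SF(3) by (simp add: g_def)
    have g1: "g 1 = vector [\<rho> 0, 0, a]" using SF(4) by (simp add: g_def)
    have "H \<le> norm (g 0 - g 1)"
    proof -
      have "\<bar>(g 0 - g 1) $ 3\<bar> \<le> norm (g 0 - g 1)" by (rule component_le_norm_cart)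
      then show ?thesis using g0 g1 Hp by simp
    qed
    then show ?case using P C rng g0 g1
      by (intro exI[of _ g] exI[of _ v]) (auto simp: zE_def)
  next
    case (Suc k)
    then have kn: "k \<le> n" by simp
    then obtain \<gamma> v where P: "Peel lam \<gamma> v 0 (2 * real k + 1)" and C: "continuous_on {0..2 * real k + 1} \<gamma>"
      and rng: "\<forall>t\<in>{0..2 * real k + 1}. (\<gamma> t$1)^2 + (\<gamma> t$2)^2 \<le> (\<rho> k)^2 \<and> a \<le> \<gamma> t$3 \<and> \<gamma> t$3 \<le> a + H"
      and s0: "\<gamma> 0 $ 3 = a + H" and ep: "\<gamma> (2 * real k + 1) = vector [\<rho> k, 0, zE k]"
      and js: "\<forall>j\<le>k. H \<le> norm (\<gamma> (2 * real j) - \<gamma> (2 * real j + 1))"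
      using Suc.IH by blast
    define \<sigma> :: real where "\<sigma> = (if even k then 1 else -1)"
    have zs: "(zE k = a \<and> \<sigma> = 1) \<or> (zE k = a + H \<and> \<sigma> = -1)" by (simp add: zE_def \<sigma>_def)
    have zE': "zE k + \<sigma> * H = zE (Suc k)" by (simp add: zE_def \<sigma>_def)
    obtain \<gamma>' v' where P': "Peel lam \<gamma>' v' 0 (2 * real k + 1 + 2)" and C': "continuous_on {0..2 * real k + 1 + 2} \<gamma>'"
      and rng': "\<forall>t\<in>{0..2 * real k + 1 + 2}. (\<gamma>' t$1)^2 + (\<gamma>' t$2)^2 \<le> (\<rho> (Suc k))^2 \<and> a \<le> \<gamma>' t$3 \<and> \<gamma>' t$3 \<le> a + H"
      and ep': "\<gamma>' (2 * real k + 1 + 2) = vector [\<rho> (Suc k), 0, zE k + \<sigma> * H]"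
      and same: "\<forall>t\<in>{0..2 * real k + 1}. \<gamma>' t = \<gamma> t"
      and jl: "H \<le> norm (\<gamma>' (2 * real k + 1 + 1) - \<gamma>' (2 * real k + 1 + 2))"
      using step_lemma[OF F assms(1) \<delta>_def dpos assms(3) Hp \<rho>p rlt far \<Theta>p muRT[OF Suc.prems] cT sT zs P C _ rng ep]
      by auto
    have e1: "2 * real (Suc k) + 1 = 2 * real k + 1 + 2" by simp
    have js': "\<forall>j\<le>Suc k. H \<le> norm (\<gamma>' (2 * real j) - \<gamma>' (2 * real j + 1))"
    proof (intro allI impI)
      fix j assume j: "j \<le> Suc k"
      show "H \<le> norm (\<gamma>' (2 * real j) - \<gamma>' (2 * real j + 1))"
      proof (cases "j \<le> k")
        case True
        have "\<gamma>' (2 * real j) = \<gamma> (2 * real j)" "\<gamma>' (2 * real j + 1) = \<gamma> (2 * real j + 1)"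
          using same True by auto
        then show ?thesis using js True by simp
      next
        case False
        then have "j = Suc k" using j by simp
        then show ?thesis using jl by (simp add: algebra_simps)
      qed
    qed
    show ?case unfolding e1
      using P' C' rng' ep' same js' zE' s0
      by (intro exI[of _ \<gamma>'] exI[of _ v']) auto
  qed
  obtain \<gamma> v where P: "Peel lam \<gamma> v 0 (2 * real n + 1)" and C: "continuous_on {0..2 * real n + 1} \<gamma>"
      and rng: "\<forall>t\<in>{0..2 * real n + 1}. (\<gamma> t$1)^2 + (\<gamma> t$2)^2 \<le> (\<rho> n)^2 \<and> a \<le> \<gamma> t$3 \<and> \<gamma> t$3 \<le> a + H"
      and s0: "\<gamma> 0 $ 3 = a + H" and ep: "\<gamma> (2 * real n + 1) = vector [\<rho> n, 0, zE n]"
      and js: "\<forall>j\<le>n. H \<le> norm (\<gamma> (2 * real j) - \<gamma> (2 * real j + 1))"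
    using main[of n] by blast
  have eel: "eel lam \<gamma> {0..2 * real n + 1}" by (rule Peel_eel[OF P C])
  have cyl: "\<gamma> ` {0..2 * real n + 1} \<subseteq> Cyl r a (a + 2 * pi * \<mu> * r)"
    using rng \<rho>n by (auto simp: Cyl_def H_def)
  have endz: "\<gamma> (2 * real n + 1) $ 3 = a" using ep by (simp add: zE_def n_def)
  define f where "f i = norm (\<gamma> (real i) - \<gamma> (real (Suc i)))" for i
  have "real (n + 1) * H \<le> (\<Sum>j\<le>n. f (2 * j))"
  proof -
    have "(\<Sum>j\<le>n. H) \<le> (\<Sum>j\<le>n. f (2 * j))"
      by (rule sum_mono) (use js in \<open>simp add: f_def add.commute\<close>)
    then show ?thesis by simp
  qed
  also have "\<dots> \<le> (\<Sum>i<2 * n + 1. f i)" by (rule sum_even_le) (simp add: f_def)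
  finally have big: "1 < (\<Sum>i<2 * n + 1. f i)" using len by linarith
  have len': "1 < curve_length \<gamma> {0..2 * real n + 1}"
    unfolding curve_length_def less_Sup_iff
  proof (intro bexI)
    show "(1::ereal) < ereal (\<Sum>i<2 * n + 1. norm (\<gamma> (real i) - \<gamma> (real (Suc i))))"
      using big by (simp add: f_def)
    show "ereal (\<Sum>i<2 * n + 1. norm (\<gamma> (real i) - \<gamma> (real (Suc i)))) \<in>
      {ereal (\<Sum>i<m. norm (\<gamma> (t i) - \<gamma> (t (Suc i)))) | m t.
       (\<forall>i\<le>m. t i \<in> {0..2 * real n + 1}) \<and> (\<forall>i<m. t i < t (Suc i))}"
      by (rule CollectI, rule exI[of _ "2 * n + 1"], rule exI[of _ real]) auto
  qed
  show ?thesis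
    using eel cyl len' s0 endz
    by (intro exI[of _ \<gamma>] exI[of _ 0] exI[of _ "2 * real n + 1"]) (simp add: H_def)
qed

end
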